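(* Let $\alpha\in\mathbb{R}$ be fixed and let $\phi\colon\, ]0,+\infty[\,\to\mathbb{R}$ be a function such that (a) $\phi$ is $\mathbb{Q}$-homogeneous of order $\alpha$, i.e. $\phi(rx)=r^{\alpha}\phi(x)$ for all $x\in\,]0,+\infty[$ and all $r\in\mathbb{Q}\cap\,]0,+\infty[$; and (b) $\phi$ is continuous at some point of $]0,+\infty[$. Then $\phi$ is continuous at every point of $]0,+\infty[$. *)

theory Defs
  imports "HOL-Analysis.Analysis"
begin

end

theory Submission
  imports Defs
begin

theorem mainTheorem1:
  fixes \<alpha> :: real and \<phi> :: "real \<Rightarrow> real"
  assumes hom: "\<And>x r. x > 0 \<Longrightarrow> r \<in> \<rat> \<Longrightarrow> r > 0 \<Longrightarrow> \<phi> (r * x) = r powr \<alpha> * \<phi> x"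
    and cont: "\<exists>x0 > 0. continuous (at x0 within {0<..}) \<phi>"
  shows "\<forall>x > 0. continuous (at x within {0<..}) \<phi>"
proof -
  obtain x0 where x0: "x0 > 0" "continuous (at x0 within {0<..}) \<phi>" using cont by blast
  define g where "g z = \<phi> z / z powr \<alpha>" for z
  define c where "c = g x0"
  have gc: "continuous (at x0 within {0<..}) g"
    unfolding g_def using x0
    by (intro continuous_intros) auto
  have ginv: "g (q * z) = g z" if "z > 0" "q \<in> \<rat>" "q > 0" for q z
    using hom[OF that] that by (simp add: g_def powr_mult)
  have gconst: "g z = c" if z: "z > 0" for z
  proof (rule ccontr)
    assume ne: "g z \<noteq> c"
    define e where "e = \<bar>g z - c\<bar>"
    have e: "e > 0" using ne by (simp add: e_def)
    from gc[unfolded continuous_within_eps_delta] e obtain d where d: "d > 0"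
      "\<forall>y\<in>{0<..}. dist y x0 < d \<longrightarrow> dist (g y) (g x0) < e" by blast
    define d' where "d' = min d x0 / 2"
    have d': "d' > 0" "d' < d" "d' < x0" using d x0 by (auto simp: d'_def)
    have "(x0 - d') / z < x0 / z" using d' z by (simp add: divide_strict_right_mono)
    then obtain q where q: "q \<in> \<rat>" "(x0 - d') / z < q" "q < x0 / z"
      using Rats_dense_in_real by blast
    have qpos: "q > 0" using q(2) d' z by (smt (verit) divide_pos_pos)
    have l: "x0 - d' < q * z" using q(2) z by (simp add: field_simps)
    have u: "q * z < x0" using q(3) z by (simp add: field_simps)
    have "q * z > 0" using qpos z by simp
    moreover have "dist (q*z) x0 < d" using l u d' by (simp add: dist_real_def)
    ultimately have "dist (g (q*z)) (g x0) < e" using d(2) by auto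
    thus False using ginv[OF z q(1) qpos] by (simp add: dist_real_def e_def c_def)
  qed
  show ?thesis
  proof (intro allI impI)
    fix x :: real assume x: "x > 0"
    have eq: "\<phi> z = z powr \<alpha> * c" if "z \<in> {0<..}" for z
      using gconst[of z] that by (auto simp: g_def field_simps)
    have "continuous (at x within {0<..}) (\<lambda>z. z powr \<alpha> * c)"
      using x by (intro continuous_intros) auto
    thus "continuous (at x within {0<..}) \<phi>"
      by (rule continuous_transform_within_openin[where S="{0<..}"]) (use eq x in auto)
  qed
qed

end
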